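(* There is a universal constant $C$ such that for every prime $p$, every positive integer $k$, and every pair of distinct $g_0,g_1\in\mathbb{Z}_p$, there is a $k$-party, one-round, deterministic protocol for the $k$-party Sum-Distinguish problem over $\mathbb{Z}_p$ relative to $g_0,g_1$ with total communication complexity at most $k\log k + C\cdot k$.
   Context: Model: parties $P_1,\dots,P_k$ each hold an input $x_i\in\mathbb{Z}_p$; a coordinator (distinct from the parties) wants to compute $f(x_1,\dots,x_k)$. In a one-round protocol each party sends a single message (a bit string depending only on its own input and, for randomized protocols, shared public randomness) to the coordinator, who then outputs a value depending only on the received messages (and the public randomness); there is no other communication. The total communication complexity is the maximum over inputs of the total number of bits sent by all parties. Sum-Distinguish relative to distinct $g_0,g_1\in\mathbb{Z}_p$: the partial function $f$ with $f=1$ if $\sum_i x_i\equiv g_1 \pmod p$ and $f=0$ if $\sum_i x_i\equiv g_0\pmod p$ (undefined otherwise); the protocol must output the correct value on every input where $f$ is defined. $\log$ is base 2. *)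

theory Defs
  imports Complex_Main "HOL-Computational_Algebra.Primes" "HOL-Library.FuncSet"
begin

definition inputs :: "nat \<Rightarrow> nat \<Rightarrow> (nat \<Rightarrow> nat) set" where
  "inputs k p = PiE {0..<k} (\<lambda>_. {0..<p})"

text \<open>A one-round deterministic protocol: party i sends msg i (x i), a bit string
  depending only on its own input; the coordinator sees the list of messages
  and outputs a bit (True = 1, False = 0).\<close>
definition messages :: "nat \<Rightarrow> (nat \<Rightarrow> nat \<Rightarrow> bool list) \<Rightarrow> (nat \<Rightarrow> nat) \<Rightarrow> bool list list" where
  "messages k msg x = map (\<lambda>i. msg i (x i)) [0..<k]"

definition protocol_output ::
  "nat \<Rightarrow> (nat \<Rightarrow> nat \<Rightarrow> bool list) \<Rightarrow> (bool list list \<Rightarrow> bool) \<Rightarrow> (nat \<Rightarrow> nat) \<Rightarrow> bool" where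
  "protocol_output k msg coord x = coord (messages k msg x)"

definition solves_sum_distinguish ::
  "nat \<Rightarrow> nat \<Rightarrow> nat \<Rightarrow> nat \<Rightarrow> (nat \<Rightarrow> nat \<Rightarrow> bool list) \<Rightarrow> (bool list list \<Rightarrow> bool) \<Rightarrow> bool" where
  "solves_sum_distinguish p k g0 g1 msg coord \<longleftrightarrow>
     (\<forall>x \<in> inputs k p.
        ((\<Sum>i<k. x i) mod p = g1 mod p \<longrightarrow> protocol_output k msg coord x = True) \<and>
        ((\<Sum>i<k. x i) mod p = g0 mod p \<longrightarrow> protocol_output k msg coord x = False))"

definition comm_cost :: "nat \<Rightarrow> nat \<Rightarrow> (nat \<Rightarrow> nat \<Rightarrow> bool list) \<Rightarrow> nat" where
  "comm_cost p k msg = Max ((\<lambda>x. \<Sum>i<k. length (msg i (x i))) ` inputs k p)"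

end

theory Submission
  imports Defs "HOL-Number_Theory.Cong"
begin

fun enc :: "nat \<Rightarrow> nat \<Rightarrow> bool list" where
  "enc 0 q = []"
| "enc (Suc L) q = odd q # enc L (q div 2)"

fun dec :: "bool list \<Rightarrow> nat" where
  "dec [] = 0"
| "dec (b # bs) = of_bool b + 2 * dec bs"

lemma length_enc[simp]: "length (enc L q) = L"
  by (induction L arbitrary: q) auto

lemma dec_enc: "dec (enc L q) = q mod 2 ^ L"
proof (induction L arbitrary: q)
  case 0 then show ?case by simp
next
  case (Suc L)
  have "q mod 2 ^ Suc L = q mod 2 + 2 * (q div 2 mod 2 ^ L)"
    by (simp add: mod_mult2_eq mult.commute)
  then show ?case using Suc by (simp add: odd_iff_mod_2_eq_one of_bool_def)
qed

lemma key0: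
  fixes p k M Q S :: nat
  assumes p: "p \<ge> 2" and M: "M = 8*k" and k: "k > 0"
    and l: "p*Q \<le> S*M" and u: "S*M < p*(Q+k)" and r: "S mod p = 0"
  shows "\<not>(1 \<le> Q mod M \<and> Q mod M \<le> 4*k)"
proof -
  define t where "t = S div p"
  have S: "S = p*t" using div_mult_mod_eq[of S p] r unfolding t_def by (simp add: mult.commute)
  have "p*Q \<le> p*(t*M)" using l S by (simp add: mult.assoc)
  hence q1: "Q \<le> t*M" using p by simp
  have "p*(t*M) < p*(Q+k)" using u S by (simp add: mult.assoc)
  hence q2: "t*M < Q + k" using p by simp
  show ?thesis
  proof (cases "Q = t*M")
    case True then show ?thesis by simp
  next
    case False
    define j where "j = t*M - Q"
    have j: "1 \<le> j" "j < k" using q1 q2 False unfolding j_def by auto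
    have t1: "t \<ge> 1" using j j_def by (cases t) auto
    have "Q = (t-1)*M + (M - j)" using q1 t1 j M unfolding j_def
      by (cases t) (auto simp: algebra_simps)
    moreover have "M - j < M" using j M by simp
    ultimately have "Q mod M = M - j" by (metis mod_less mod_mult_self3)
    then show ?thesis using j M by auto
  qed
qed

lemma keyh:
  fixes p k M Q S :: nat
  assumes p: "p \<ge> 2" and M: "M = 8*k" and k: "k > 0"
    and l: "p*Q \<le> S*M" and u: "S*M < p*(Q+k)" and r: "S mod p = p div 2"
  shows "1 \<le> Q mod M \<and> Q mod M \<le> 4*k"
proof -
  define t where "t = S div p"
  define h where "h = p div 2"
  have S: "S = p*t + h" using div_mult_mod_eq[of S p] r unfolding t_def h_def by (simp add: mult.commute)
  have h1: "2*h \<le> p" "p \<le> 4*h" using p unfolding h_def by auto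
  have "2*(p*Q) \<le> 2*(p*(t*M)) + (2*h)*M" using l S by (simp add: algebra_simps)
  also have "\<dots> \<le> 2*(p*(t*M)) + p*M" using h1 by simp
  finally have "p*(2*Q) \<le> p*(2*(t*M) + M)" by (simp add: algebra_simps)
  hence q1: "Q \<le> t*M + 4*k" using p M by simp
  have "p*(4*(t*M)) + p*M \<le> 4*(p*(t*M)) + (4*h)*M" using h1 by (simp add: algebra_simps)
  also have "\<dots> = 4*(S*M)" using S by (simp add: algebra_simps)
  also have "\<dots> < 4*(p*(Q+k))" using u by simp
  finally have "p*(4*(t*M) + M) < p*(4*(Q+k))" by (simp add: algebra_simps)
  hence "4*(t*M) + M < 4*(Q+k)" by (meson mult_less_cancel1)
  hence q2: "t*M + k < Q" using M by simp
  define R where "R = Q - t*M"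
  have Q: "Q = R + t*M" "k < R" "R \<le> 4*k" using q1 q2 unfolding R_def by auto
  have "Q mod M = R" using Q M k by simp
  then show ?thesis using Q by auto
qed


lemma log_bound:
  fixes k :: nat assumes k: "k > 0"
  shows "k < 2 ^ (nat \<lfloor>log 2 (real k)\<rfloor> + 1)" "real (nat \<lfloor>log 2 (real k)\<rfloor>) \<le> log 2 (real k)"
proof -
  have lg: "log 2 (real k) \<ge> 0" using k by simp
  have e: "real (nat \<lfloor>log 2 (real k)\<rfloor>) = of_int \<lfloor>log 2 (real k)\<rfloor>" using lg by simp
  show "real (nat \<lfloor>log 2 (real k)\<rfloor>) \<le> log 2 (real k)" using e by linarith
  have "real k = 2 powr (log 2 (real k))" using k by simp
  also have "\<dots> < 2 powr (real (nat \<lfloor>log 2 (real k)\<rfloor>) + 1)"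
    using e by (intro powr_less_mono) linarith+
  also have "\<dots> = real (2 ^ (nat \<lfloor>log 2 (real k)\<rfloor> + 1))"
    by (simp add: powr_add powr_realpow)
  finally show "k < 2 ^ (nat \<lfloor>log 2 (real k)\<rfloor> + 1)" by linarith
qed

theorem theorem3p3:
  shows "\<exists>C::real. \<forall>(p::nat) (k::nat) (g0::nat) (g1::nat).
           prime p \<longrightarrow> 0 < k \<longrightarrow> g0 < p \<longrightarrow> g1 < p \<longrightarrow> g0 \<noteq> g1 \<longrightarrow>
           (\<exists>(msg :: nat \<Rightarrow> nat \<Rightarrow> bool list) (coord :: bool list list \<Rightarrow> bool).
              solves_sum_distinguish p k g0 g1 msg coord \<and>
              real (comm_cost p k msg) \<le> real k * log 2 (real k) + C * real k)"
proof (intro exI[of _ 4] allI impI)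
  fix p k g0 g1 :: nat
  assume pr: "prime p" and k: "0 < k" and g0: "g0 < p" and g1: "g1 < p" and gne: "g0 \<noteq> g1"
  have p2: "p \<ge> 2" using pr by (simp add: prime_ge_2_nat)
  define h where "h = p div 2"
  define d where "d = g1 + (p - g0)"
  have ndvd: "\<not> p dvd d"
  proof
    assume "p dvd d"
    then obtain m where m: "d = p * m" by blast
    have "0 < d" "d < 2 * p" using g0 g1 unfolding d_def by auto
    hence "m = 1" using m by (cases m) auto
    then show False using m gne g0 g1 unfolding d_def by auto
  qed
  have cop: "coprime d p" using prime_imp_coprime[OF pr ndvd] by (simp add: coprime_commute)
  obtain x0 where x0: "[d * x0 = gcd d p] (mod p)" using cong_solve_nat by blast
  have x0': "(d * x0) mod p = 1 mod p" using x0 cop unfolding cong_def by simp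
  define c where "c = x0 * h"
  have hp: "h < p" using p2 unfolding h_def by simp
  have cd: "(c * d) mod p = h"
  proof -
    have "(c*d) mod p = ((d*x0) * h) mod p" unfolding c_def by (simp add: algebra_simps)
    also have "\<dots> = ((d*x0) mod p * h) mod p" by (simp add: mod_mult_left_eq)
    also have "\<dots> = h" using x0' hp by (simp add: mod_mult_left_eq)
    finally show ?thesis .
  qed
  define M where "M = 8 * k"
  define L where "L = nat \<lfloor>log 2 (real k)\<rfloor> + 4"
  have MLb: "M < 2 ^ L"
  proof -
    have "k < 2 ^ (nat \<lfloor>log 2 (real k)\<rfloor> + 1)" using log_bound(1)[OF k] .
    hence "8 * k < 8 * 2 ^ (nat \<lfloor>log 2 (real k)\<rfloor> + 1)" by simp
    also have "\<dots> = 2 ^ L" unfolding L_def by (simp add: power_add)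
    finally show ?thesis unfolding M_def .
  qed
  define y where "y i v = (c * v + (if i = 0 then c * (p - g0) else 0)) mod p" for i v :: nat
  define q where "q i v = (y i v * M) div p" for i v :: nat
  define msg where "msg i v = enc L (q i v)" for i v :: nat
  define coord where "coord ms = (let Q = sum_list (map dec ms) in 1 \<le> Q mod M \<and> Q mod M \<le> 4 * k)"
    for ms :: "bool list list"
  have yp: "y i v < p" for i v using p2 unfolding y_def by simp
  have qM: "q i v < M" for i v
  proof -
    have "y i v * M < p * M" using yp[of i v] k unfolding M_def by simp
    thus ?thesis unfolding q_def by (simp add: div_less_iff_less_mult mult.commute)
  qed
  have ql: "p * q i v \<le> y i v * M" for i v unfolding q_def
    by (metis div_times_less_eq_dividend mult.commute)
  have qu: "y i v * M < p * (q i v + 1)" for i v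
  proof -
    have "y i v * M = p * q i v + (y i v * M) mod p" unfolding q_def by simp
    moreover have "(y i v * M) mod p < p" using p2 by simp
    ultimately show ?thesis by simp
  qed
  have solves: "solves_sum_distinguish p k g0 g1 msg coord"
    unfolding solves_sum_distinguish_def
  proof (intro ballI conjI impI)
    fix x assume xin: "x \<in> inputs k p"
    define Q where "Q = (\<Sum>i<k. q i (x i))"
    define S where "S = (\<Sum>i<k. y i (x i))"
    define X where "X = (\<Sum>i<k. x i)"
    have out: "protocol_output k msg coord x = (1 \<le> Q mod M \<and> Q mod M \<le> 4 * k)"
    proof -
      have "sum_list (map dec (messages k msg x)) = sum_list (map (\<lambda>i. q i (x i)) [0..<k])"
        unfolding messages_def msg_def
        by (simp add: comp_def dec_enc, intro arg_cong[where f=sum_list] map_cong refl)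
           (meson MLb mod_less order.strict_trans qM)
      also have "\<dots> = Q" unfolding Q_def by (simp add: sum_list_distinct_conv_sum_set atLeast0LessThan)
      finally show ?thesis unfolding protocol_output_def coord_def by simp
    qed
    have l: "p * Q \<le> S * M"
      unfolding Q_def S_def by (simp add: sum_distrib_left sum_distrib_right sum_mono ql)
    have u: "S * M < p * (Q + k)"
    proof -
      have "S * M = (\<Sum>i<k. y i (x i) * M)" unfolding S_def by (simp add: sum_distrib_right)
      also have "\<dots> < (\<Sum>i<k. p * (q i (x i) + 1))"
        using k qu by (intro sum_strict_mono) auto
      also have "\<dots> = p * (Q + k)" unfolding Q_def by (simp add: sum_distrib_left sum.distrib algebra_simps)
      finally show ?thesis .
    qed
    have Smod: "S mod p = (c * (X + (p - g0))) mod p"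
    proof -
      have "S mod p = (\<Sum>i<k. c * x i + (if i = 0 then c * (p - g0) else 0)) mod p"
        unfolding S_def y_def by (simp add: mod_sum_eq)
      also have "(\<Sum>i<k. c * x i + (if i = 0 then c * (p - g0) else 0)) = c * X + c * (p - g0)"
        using k unfolding X_def by (simp add: sum.distrib sum_distrib_left)
      finally show ?thesis by (simp add: algebra_simps)
    qed
    show "protocol_output k msg coord x = True" if "(\<Sum>i<k. x i) mod p = g1 mod p"
    proof -
      have "(X + (p - g0)) mod p = d mod p" using that g1 unfolding X_def d_def
        by (metis mod_add_left_eq)
      hence "S mod p = (c * d) mod p" using Smod by (metis mod_mult_right_eq)
      hence "S mod p = p div 2" using cd unfolding h_def by simp
      from keyh[OF p2 M_def k l u this] show ?thesis using out by simp
    qed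
    show "protocol_output k msg coord x = False" if "(\<Sum>i<k. x i) mod p = g0 mod p"
    proof -
      have "(X + (p - g0)) mod p = (g0 + (p - g0)) mod p" using that g0 unfolding X_def
        by (metis mod_add_left_eq mod_less)
      hence "(X + (p - g0)) mod p = 0" using g0 by simp
      hence "S mod p = 0" using Smod by (metis mod_mult_right_eq mult_0_right mod_0)
      from key0[OF p2 M_def k l u this] show ?thesis using out by simp
    qed
  qed
  have ne: "inputs k p \<noteq> {}" unfolding inputs_def using p2 by (simp add: PiE_eq_empty_iff)
  have cost: "comm_cost p k msg = k * L"
  proof -
    have "(\<lambda>x. \<Sum>i<k. length (msg i (x i))) ` inputs k p = {k * L}"
      using ne unfolding msg_def by auto
    thus ?thesis unfolding comm_cost_def by simp
  qed
  have "real (k * L) \<le> real k * log 2 (real k) + 4 * real k"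
  proof -
    have "real L \<le> log 2 (real k) + 4" using log_bound(2)[OF k] unfolding L_def by simp
    hence "real k * real L \<le> real k * (log 2 (real k) + 4)" by (intro mult_left_mono) auto
    thus ?thesis by (simp add: algebra_simps)
  qed
  thus "\<exists>msg coord. solves_sum_distinguish p k g0 g1 msg coord \<and>
           real (comm_cost p k msg) \<le> real k * log 2 (real k) + 4 * real k"
    using solves cost by (intro exI[of _ msg] exI[of _ coord]) simp
qed

end
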